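(* Let $q$ be a prime power and let $r$ be a prime dividing $q-1$. Then for any positive integer $d$ and any integer $1\le k\le r^d-1$, there exists a polynomial $f\in\mathbb{F}_q[x]$ of degree $k$ that divides $x^{r^d}-1$ and satisfies $f(1)\neq 0$. *)

theory Defs
  imports "HOL-Computational_Algebra.Polynomial"
begin

end

theory Submission
  imports Defs
begin

lemma ff_pow_card1:
  fixes x :: "'a::{field,finite}"
  assumes "x \<noteq> 0"
  shows "x ^ (card (UNIV :: 'a set) - 1) = 1"
proof -
  have "(\<Prod>y\<in>UNIV-{0}. x * y) = x ^ (card (UNIV :: 'a set) - 1) * \<Prod>(UNIV-{0::'a})"
    by (simp add: prod.distrib mult_ac)
  moreover have "(\<Prod>y\<in>UNIV-{0}. x * y) = (\<Prod>y\<in>UNIV-{0::'a}. y)"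
    by (rule prod.reindex_bij_witness[of _ "\<lambda>y. y / x" "\<lambda>y. x * y"]) (use assms in auto)
  moreover have "\<Prod>(UNIV-{0::'a}) \<noteq> 0" by simp
  ultimately show ?thesis by (metis mult_cancel_right1)
qed

lemma degree_Xn_minus1:
  assumes "n > 0"
  shows "degree ([:0,1:]^n - (1::'a::idom poly)) = n"
proof -
  have "[:0,1:]^n - (1::'a poly) = [:0,1:]^n + (-1)" by simp
  also have "degree \<dots> = degree ([:0,1::'a:]^n)"
    by (rule degree_add_eq_left) (use assms in \<open>simp add: degree_power_eq\<close>)
  finally show ?thesis by (simp add: degree_power_eq)
qed

lemma poly_Xn_minus1[simp]: "poly ([:0,1:]^n - 1) a = a ^ n - (1::'a::comm_ring_1)"
  by simp

lemma many_roots: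
  fixes r :: nat
  assumes "r > 0" and "r dvd card (UNIV :: 'a::{field,finite} set) - 1"
  shows "r \<le> card {a::'a. a ^ r = 1}"
proof -
  define Q where "Q = card (UNIV :: 'a set) - 1"
  obtain m where m: "Q = r * m" using assms Q_def by (auto elim: dvdE)
  have card2: "card (UNIV :: 'a set) \<ge> 2"
    using card_mono[of "UNIV :: 'a set" "{0,1::'a}"] by simp
  have Qpos: "Q > 0" using card2 Q_def by simp
  define X :: "'a poly" where "X = [:0,1:]"
  define A where "A = X ^ r - 1"
  define S where "S = (\<Sum>i<m. (X ^ r) ^ i)"
  have PAS: "X ^ Q - 1 = A * S"
    unfolding A_def S_def m using power_diff_1_eq[of "X^r" m] by (simp add: power_mult)
  have degP: "degree (X ^ Q - 1) = Q" unfolding X_def using degree_Xn_minus1 Qpos by blast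
  have degA: "degree A = r" unfolding A_def X_def using degree_Xn_minus1 assms(1) by blast
  have A0: "A \<noteq> 0" using degA assms(1) by auto
  have S0: "S \<noteq> 0" using PAS degP Qpos by auto
  have degS: "degree S = Q - r" using PAS degP degA degree_mult_eq[OF A0 S0] by simp
  have rootsP: "{x. poly (X ^ Q - 1) x = 0} = UNIV - {0}"
    using ff_pow_card1 Q_def Qpos unfolding X_def by (auto simp: power_0_left)
  have c1: "Q = card {x. poly (X ^ Q - 1) x = 0}" using rootsP Q_def by (simp add: card_Diff_singleton)
  have "{x. poly (X ^ Q - 1) x = 0} \<subseteq> {x. poly A x = 0} \<union> {x. poly S x = 0}"
    using PAS by auto
  hence c2: "card {x. poly (X ^ Q - 1) x = 0} \<le> card ({x. poly A x = 0} \<union> {x. poly S x = 0})"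
    by (intro card_mono) auto
  have c3: "card ({x. poly A x = 0} \<union> {x. poly S x = 0}) \<le> card {x. poly A x = 0} + card {x. poly S x = 0}" by (rule card_Un_le)
  have c4: "card {x. poly S x = 0} \<le> Q - r" using card_poly_roots_bound[OF S0] degS by simp
  have fin: "Q \<le> card {x. poly A x = 0} + (Q - r)" using c1 c2 c3 c4 by linarith
  have "r \<le> Q" using assms(2) Qpos Q_def dvd_imp_le by blast
  with fin have "r \<le> card {x. poly A x = 0}" by linarith
  moreover have "{x. poly A x = 0} = {a. a ^ r = 1}" unfolding A_def X_def by simp
  ultimately show ?thesis by simp
qed

lemma prod_linear_dvd:
  fixes p :: "'a::idom poly"
  assumes "finite B" "\<forall>a\<in>B. poly p a = 0"
  shows "(\<Prod>a\<in>B. [:-a,1:]) dvd p"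
  using assms
proof (induction B arbitrary: p rule: finite_induct)
  case empty then show ?case by simp
next
  case (insert b B)
  have "(\<Prod>a\<in>B. [:-a,1:]) dvd p" using insert.IH insert.prems by auto
  then obtain q where q: "p = (\<Prod>a\<in>B. [:-a,1:]) * q" by (elim dvdE)
  have "poly (\<Prod>a\<in>B. [:-a,1:]) b \<noteq> 0" using insert(1,2) by (auto simp: poly_prod prod_zero_iff)
  moreover have "poly p b = 0" using insert by auto
  ultimately have "poly q b = 0" using q by simp
  then have "[:-b,1:] dvd q" using poly_eq_0_iff_dvd by blast
  then have "[:-b,1:] * (\<Prod>a\<in>B. [:-a,1:]) dvd (\<Prod>a\<in>B. [:-a,1:]) * q"
    by (metis mult.commute mult_dvd_mono dvd_refl)
  then show ?case using insert(1,2) q by (simp add: prod.insert)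
qed

lemma pcompose_pow_left: "pcompose (p ^ n) q = (pcompose p q) ^ n"
  for p q :: "'a::comm_semiring_1 poly"
  by (induct n) (simp_all add: pcompose_1 pcompose_mult)

lemma choose_h:
  fixes r j :: nat
  assumes "r > 0" and "r dvd card (UNIV :: 'a::{field,finite} set) - 1" and "j < r"
  shows "\<exists>h :: 'a poly. degree h = j \<and> poly h 1 \<noteq> 0 \<and> h * [:-1,1:] dvd [:0,1:]^r - 1"
proof -
  let ?R = "{a::'a. a ^ r = 1}"
  have "r \<le> card ?R" using many_roots assms by blast
  moreover have "1 \<in> ?R" by simp
  ultimately have "j \<le> card (?R - {1})" using assms(3) by (simp add: card_Diff_singleton)
  then obtain B where B: "B \<subseteq> ?R - {1}" "card B = j" "finite B"
    by (rule obtain_subset_with_card_n)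
  define h where "h = (\<Prod>a\<in>B. [:-a,1::'a:])"
  have "degree h = j" unfolding h_def using B
    by (subst degree_prod_eq_sum_degree) auto
  moreover have "poly h 1 \<noteq> 0" unfolding h_def using B by (auto simp: poly_prod)
  moreover have "h * [:-1,1:] = (\<Prod>a\<in>insert 1 B. [:-a,1::'a:])"
    unfolding h_def using B by (subst prod.insert) (auto simp: mult.commute)
  moreover have "(\<Prod>a\<in>insert 1 B. [:-a,1::'a:]) dvd [:0,1:]^r - 1"
    using B by (intro prod_linear_dvd) auto
  ultimately show ?thesis by metis
qed

lemma main_ind:
  fixes r d :: nat
  assumes "r > 0" and "r dvd card (UNIV :: 'a::{field,finite} set) - 1"
  shows "\<forall>k \<le> r ^ d - 1. \<exists>f :: 'a poly. degree f = k \<and> f dvd ([:0,1:]^(r^d) - 1) \<and> poly f 1 \<noteq> 0"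
proof (induction d)
  case 0
  show ?case by (auto intro: exI[of _ 1])
next
  case (Suc d)
  show ?case
  proof (intro allI impI)
    fix k assume k: "k \<le> r ^ Suc d - 1"
    define M where "M = r ^ d"
    have Mpos: "M > 0" using assms(1) M_def by simp
    have "r * M > 0" using Mpos assms(1) by simp
    moreover have "r ^ Suc d = r * M" by (simp add: M_def)
    ultimately have kM: "k < r * M" using k by linarith
    define j where "j = k div M"
    define s where "s = k mod M"
    have jr: "j < r" using kM j_def Mpos by (simp add: div_less_iff_less_mult)
    have "s < M" using Mpos s_def by simp
    hence sM: "s \<le> r ^ d - 1" using M_def by linarith
    obtain g :: "'a poly" where g: "degree g = s" "g dvd [:0,1:]^M - 1" "poly g 1 \<noteq> 0"
      using Suc.IH sM M_def by blast
    obtain h :: "'a poly" where h: "degree h = j" "poly h 1 \<noteq> 0" "h * [:-1,1:] dvd [:0,1:]^r - 1"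
      using choose_h[OF assms jr] by blast
    define Y :: "'a poly" where "Y = [:0,1:]^M"
    define H where "H = pcompose h Y"
    have polyY: "poly Y 1 = 1" unfolding Y_def by simp
    have H1: "poly H 1 \<noteq> 0" unfolding H_def using h(2) polyY by (simp add: poly_pcompose)
    have g0: "g \<noteq> 0" using g(3) by auto
    have H0: "H \<noteq> 0" using H1 by auto
    have degY: "degree Y = M" unfolding Y_def by (simp add: degree_power_eq)
    have "degree (g * H) = k"
      using degree_mult_eq[OF g0 H0] g(1) h(1) degY unfolding H_def
      by (simp add: degree_pcompose j_def s_def mult.commute)
    moreover have "poly (g * H) 1 \<noteq> 0" using g(3) H1 by simp
    moreover have "g * H dvd [:0,1:]^(r ^ Suc d) - 1"
    proof -
      obtain c where c: "[:0,1:]^r - 1 = h * [:-1,1:] * c" using h(3) by (auto elim: dvdE)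
      have "pcompose ([:0,1:]^r - 1) Y = pcompose (h * [:-1,1:] * c) Y" using c by simp
      hence "Y ^ r - 1 = H * (Y - 1) * pcompose c Y"
        unfolding H_def by (simp add: pcompose_diff pcompose_mult pcompose_pow_left pcompose_pCons pcompose_1 algebra_simps)
      moreover have "g * H dvd H * (Y - 1) * pcompose c Y"
        using g(2) unfolding Y_def by (simp add: mult.commute mult_dvd_mono dvd_mult2)
      moreover have "Y ^ r = [:0,1:]^(r ^ Suc d)" unfolding Y_def M_def
        by (simp add: power_mult[symmetric] mult.commute)
      ultimately show ?thesis by metis
    qed
    ultimately show "\<exists>f :: 'a poly. degree f = k \<and> f dvd ([:0,1:]^(r^Suc d) - 1) \<and> poly f 1 \<noteq> 0"
      by blast
  qed
qed

theorem lemma5p4: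
  fixes r d k :: nat
  assumes "prime r"
    and "r dvd card (UNIV :: 'a::{field,finite} set) - 1"
    and "d > 0"
    and "1 \<le> k" and "k \<le> r ^ d - 1"
  shows "\<exists>f :: 'a poly. degree f = k \<and> f dvd (monom 1 (r ^ d) - 1) \<and> poly f 1 \<noteq> 0"
proof -
  have "r > 0" using assms(1) prime_gt_0_nat by blast
  from main_ind[OF this assms(2), of d] assms(5)
  show ?thesis by (simp add: monom_altdef)
qed

end
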